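(* Fix $\delta\in[0,1)$ and $V_{\sf P}\ge0$. Then $$\lim_{p\to0}g(\delta,\rho_1,c)=1,\qquad \lim_{p\to0}g(\delta,\rho_2,c)=\frac{1-\delta}{1-\delta\rho_2},$$ where $\rho_1$ and $c$ depend on $p$ as defined below and $\rho_2$ does not depend on $p$.
   Context: For $p\in(0,1)$ and $V_{\sf P}\ge0$ define $\rho_1=\frac{e^{(1-p)/p}}{1+e^{V_{\sf P}}+e^{(1-p)/p}}$, $\rho_2=\frac{e^{-1}}{1+e^{V_{\sf P}}+e^{-1}}$, and $c=\frac{\ln((1-\rho_2)/(1-\rho_1))}{\ln(\rho_1/\rho_2)+\ln((1-\rho_2)/(1-\rho_1))}$. For $\rho,x\in[0,1]$, let $X_1(\rho,x),X_2(\rho,x),\dots$ be i.i.d. random variables with $X_k=1-x$ with probability $\rho$ and $X_k=-x$ with probability $1-\rho$; let $S_n(\rho,x)=\sum_{k=1}^nX_k(\rho,x)$ and $N(\rho,x)=\inf\{n\ge1:S_n(\rho,x)<0\}$. Define $g(\delta,\rho,x)=\mathbb E\left[1-\delta^{N(\rho,x)}\right]$ (with the convention $\delta^{\infty}=0$). *)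

theory Defs
  imports "HOL-Probability.Probability"
begin

definition walk_step :: "real \<Rightarrow> bool \<Rightarrow> real" where
  "walk_step x b = (if b then 1 - x else - x)"

definition walk_S :: "real \<Rightarrow> nat \<Rightarrow> bool stream \<Rightarrow> real" where
  "walk_S x n \<omega> = (\<Sum>k<n. walk_step x (\<omega> !! k))"

definition walk_N :: "real \<Rightarrow> bool stream \<Rightarrow> enat" where
  "walk_N x \<omega> = (if \<exists>n\<ge>1. walk_S x n \<omega> < 0
                 then enat (LEAST n. 1 \<le> n \<and> walk_S x n \<omega> < 0) else \<infinity>)"

definition enat_pow :: "real \<Rightarrow> enat \<Rightarrow> real" where
  "enat_pow d m = (case m of enat n \<Rightarrow> d ^ n | \<infinity> \<Rightarrow> 0)"

definition coin_space :: "real \<Rightarrow> bool stream measure" where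
  "coin_space \<rho> = stream_space (measure_pmf (bernoulli_pmf \<rho>))"

definition g :: "real \<Rightarrow> real \<Rightarrow> real \<Rightarrow> real" where
  "g \<delta> \<rho> x = (\<integral>\<omega>. 1 - enat_pow \<delta> (walk_N x \<omega>) \<partial>coin_space \<rho>)"

definition rho1 :: "real \<Rightarrow> real \<Rightarrow> real" where
  "rho1 VP p = exp ((1 - p) / p) / (1 + exp VP + exp ((1 - p) / p))"

definition rho2 :: "real \<Rightarrow> real" where
  "rho2 VP = exp (-1) / (1 + exp VP + exp (-1))"

definition cc :: "real \<Rightarrow> real \<Rightarrow> real" where
  "cc VP p = ln ((1 - rho2 VP) / (1 - rho1 VP p)) /
     (ln (rho1 VP p / rho2 VP) + ln ((1 - rho2 VP) / (1 - rho1 VP p)))"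

end

theory Submission imports Defs begin


lemma coin_prob: "prob_space (coin_space r)"
  unfolding coin_space_def
  by (rule prob_space.prob_space_stream_space) (rule prob_space_measure_pmf)

lemma space_coin[simp]: "space (coin_space r) = UNIV"
  unfolding coin_space_def by (simp add: space_stream_space)

lemma walk_S_meas[measurable]: "walk_S x n \<in> borel_measurable (coin_space r)"
  unfolding walk_S_def walk_step_def coin_space_def by measurable

lemma walk_N_meas: "walk_N x \<in> measurable (coin_space r) (count_space UNIV)"
  unfolding walk_N_def by measurable

lemma h_meas[measurable]: "(\<lambda>\<omega>. enat_pow d (walk_N x \<omega>)) \<in> borel_measurable (coin_space r)"
  using measurable_compose[OF walk_N_meas, of "enat_pow d" borel] by simp

lemma prefix_nn:
  assumes r: "0 \<le> r" "r \<le> 1" and f[measurable]: "f \<in> borel_measurable (coin_space r)"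
  shows "(\<integral>\<^sup>+\<omega>. indicator {\<omega>. \<forall>k<n. \<omega> !! k} \<omega> * f (sdrop n \<omega>) \<partial>coin_space r)
       = ennreal (r ^ n) * (\<integral>\<^sup>+\<omega>. f \<omega> \<partial>coin_space r)"
  using f
proof (induction n arbitrary: f)
  case 0 then show ?case by (simp add: indicator_def)
next
  case (Suc n)
  interpret B: prob_space "measure_pmf (bernoulli_pmf r)" by (rule prob_space_measure_pmf)
  have m: "(\<lambda>\<omega>. indicator {\<omega>. \<forall>k<Suc n. \<omega> !! k} \<omega> * f (sdrop (Suc n) \<omega>)) \<in> borel_measurable (stream_space (measure_pmf (bernoulli_pmf r)))"
    using Suc.prems unfolding coin_space_def by measurable
  have "(\<integral>\<^sup>+\<omega>. indicator {\<omega>. \<forall>k<Suc n. \<omega> !! k} \<omega> * f (sdrop (Suc n) \<omega>) \<partial>coin_space r)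
     = (\<integral>\<^sup>+x. (\<integral>\<^sup>+X. indicator {\<omega>. \<forall>k<Suc n. \<omega> !! k} (x##X) * f (sdrop (Suc n) (x##X)) \<partial>coin_space r) \<partial>measure_pmf (bernoulli_pmf r))"
    unfolding coin_space_def by (rule prob_space.nn_integral_stream_space[OF prob_space_measure_pmf m])
  also have "\<dots> = (\<integral>\<^sup>+x. (if x then 1 else 0) * (\<integral>\<^sup>+X. indicator {\<omega>. \<forall>k<n. \<omega> !! k} X * f (sdrop n X) \<partial>coin_space r) \<partial>measure_pmf (bernoulli_pmf r))"
  proof (rule nn_integral_cong)
    fix x :: bool
    show "(\<integral>\<^sup>+X. indicator {\<omega>. \<forall>k<Suc n. \<omega> !! k} (x##X) * f (sdrop (Suc n) (x##X)) \<partial>coin_space r) = (if x then 1 else 0) * (\<integral>\<^sup>+X. indicator {\<omega>. \<forall>k<n. \<omega> !! k} X * f (sdrop n X) \<partial>coin_space r)"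
    proof (cases x)
      case True
      have "\<And>X. indicator {\<omega>. \<forall>k<Suc n. \<omega> !! k} (x##X) = (indicator {\<omega>. \<forall>k<n. \<omega> !! k} X :: ennreal)"
        using True by (auto simp: indicator_def less_Suc_eq_0_disj)
      then show ?thesis using True by simp
    next
      case False
      have "\<And>X. indicator {\<omega>. \<forall>k<Suc n. \<omega> !! k} (x##X) = (0 :: ennreal)"
        using False by (auto simp: indicator_def)
      then show ?thesis using False by simp
    qed
  qed
  also have "\<dots> = ennreal (r ^ Suc n) * (\<integral>\<^sup>+\<omega>. f \<omega> \<partial>coin_space r)"
    using Suc r by (simp add: ennreal_mult' mult_ac)
  finally show ?case .
qed

lemma walk_S_heads:
  assumes "\<forall>k<m. \<omega> !! k"
  shows "walk_S x m \<omega> = real m * (1 - x)"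
  using assms unfolding walk_S_def walk_step_def by simp

lemma walk_N_B:
  assumes x: "x < 1" and A: "\<forall>k<n. \<omega> !! k" and nt: "\<not> \<omega> !! n" and nx: "real n * (1 - x) < x"
  shows "walk_N x \<omega> = enat (Suc n)"
proof -
  have SS: "walk_S x (Suc n) \<omega> < 0"
    using walk_S_heads[OF A, of x] nt nx by (simp add: walk_S_def walk_step_def)
  have "(LEAST m. 1 \<le> m \<and> walk_S x m \<omega> < 0) = Suc n"
  proof (rule Least_equality)
    show "1 \<le> Suc n \<and> walk_S x (Suc n) \<omega> < 0" using SS by simp
  next
    fix m assume m: "1 \<le> m \<and> walk_S x m \<omega> < 0"
    show "Suc n \<le> m"
    proof (rule ccontr)
      assume "\<not> Suc n \<le> m"
      then have "\<forall>k<m. \<omega> !! k" using A by auto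
      then have "walk_S x m \<omega> = real m * (1 - x)" by (rule walk_S_heads)
      moreover have "0 \<le> real m * (1 - x)" using x by simp
      ultimately show False using m by simp
    qed
  qed
  then show ?thesis using SS unfolding walk_N_def by (auto intro: exI[of _ "Suc n"])
qed

lemma h_A:
  assumes x: "x < 1" and A: "\<forall>k<K. \<omega> !! k" and d: "0 \<le> d" "d \<le> 1"
  shows "enat_pow d (walk_N x \<omega>) \<le> d ^ K"
proof (cases "\<exists>n\<ge>1. walk_S x n \<omega> < 0")
  case True
  define m where "m = (LEAST n. 1 \<le> n \<and> walk_S x n \<omega> < 0)"
  have m: "1 \<le> m \<and> walk_S x m \<omega> < 0" unfolding m_def using True by (metis (mono_tags, lifting) LeastI)
  have "K < m"
  proof (rule ccontr)
    assume "\<not> K < m"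
    then have "\<forall>k<m. \<omega> !! k" using A by auto
    then have "walk_S x m \<omega> = real m * (1 - x)" by (rule walk_S_heads)
    moreover have "0 \<le> real m * (1 - x)" using x by simp
      ultimately show False using m by simp
  qed
  then have "d ^ m \<le> d ^ K" using d by (simp add: power_decreasing)
  then show ?thesis using True unfolding walk_N_def enat_pow_def m_def by simp
next
  case False
  then show ?thesis using d unfolding walk_N_def enat_pow_def by auto
qed

lemma h_nonneg: "0 \<le> d \<Longrightarrow> 0 \<le> enat_pow d m"
  unfolding enat_pow_def by (cases m) auto

lemma h_decomp:
  assumes x: "x < 1" and K: "\<forall>n<K. real n * (1 - x) < x"
  shows "ennreal (enat_pow d (walk_N x \<omega>)) =
     (\<Sum>n<K. ennreal (d ^ Suc n) * indicator {\<omega>. (\<forall>k<n. \<omega> !! k) \<and> \<not> \<omega> !! n} \<omega>)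
     + indicator {\<omega>. \<forall>k<K. \<omega> !! k} \<omega> * ennreal (enat_pow d (walk_N x \<omega>))"
  using K
proof (induction K)
  case 0 then show ?case by simp
next
  case (Suc K)
  have IH: "ennreal (enat_pow d (walk_N x \<omega>)) =
     (\<Sum>n<K. ennreal (d ^ Suc n) * indicator {\<omega>. (\<forall>k<n. \<omega> !! k) \<and> \<not> \<omega> !! n} \<omega>)
     + indicator {\<omega>. \<forall>k<K. \<omega> !! k} \<omega> * ennreal (enat_pow d (walk_N x \<omega>))"
    using Suc by auto
  have KK: "real K * (1 - x) < x" using Suc.prems by auto
  have "indicator {\<omega>. \<forall>k<K. \<omega> !! k} \<omega> * ennreal (enat_pow d (walk_N x \<omega>))
     = ennreal (d ^ Suc K) * indicator {\<omega>. (\<forall>k<K. \<omega> !! k) \<and> \<not> \<omega> !! K} \<omega>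
       + indicator {\<omega>. \<forall>k<Suc K. \<omega> !! k} \<omega> * ennreal (enat_pow d (walk_N x \<omega>))"
  proof (cases "\<forall>k<K. \<omega> !! k")
    case True
    show ?thesis
    proof (cases "\<omega> !! K")
      case True2: True
      then show ?thesis using True by (auto simp: indicator_def less_Suc_eq)
    next
      case False
      then show ?thesis using True walk_N_B[OF x True False KK]
        by (auto simp: indicator_def less_Suc_eq enat_pow_def)
    qed
  next
    case False
    then show ?thesis by (auto simp: indicator_def less_Suc_eq)
  qed
  then show ?case using IH by (simp add: add.assoc)
qed

lemma h_le1: "0 \<le> d \<Longrightarrow> d \<le> 1 \<Longrightarrow> enat_pow d m \<le> 1"
  unfolding enat_pow_def by (cases m) (auto simp: power_le_one)

lemma nn_not_shd:
  assumes r: "0 \<le> r" "r \<le> 1"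
  shows "(\<integral>\<^sup>+\<omega>. indicator {\<omega>. \<not> shd \<omega>} \<omega> \<partial>coin_space r) = ennreal (1 - r)"
proof -
  have m: "(indicator {\<omega>. \<not> shd \<omega>} :: bool stream \<Rightarrow> ennreal) \<in> borel_measurable (stream_space (measure_pmf (bernoulli_pmf r)))"
    by measurable
  have "(\<integral>\<^sup>+\<omega>. indicator {\<omega>. \<not> shd \<omega>} \<omega> \<partial>coin_space r)
    = (\<integral>\<^sup>+x. (\<integral>\<^sup>+X. indicator {\<omega>. \<not> shd \<omega>} (x##X) \<partial>coin_space r) \<partial>measure_pmf (bernoulli_pmf r))"
    unfolding coin_space_def by (rule prob_space.nn_integral_stream_space[OF prob_space_measure_pmf m])
  also have "\<dots> = (\<integral>\<^sup>+x. (if x then 0 else 1) \<partial>measure_pmf (bernoulli_pmf r))"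
  proof (rule nn_integral_cong)
    fix x :: bool
    interpret P: prob_space "coin_space r" by (rule coin_prob)
    show "(\<integral>\<^sup>+X. indicator {\<omega>. \<not> shd \<omega>} (x##X) \<partial>coin_space r) = (if x then 0 else 1)"
      using P.emeasure_space_1 by (cases x) (auto simp: indicator_def)
  qed
  also have "\<dots> = ennreal (1 - r)" using r by simp
  finally show ?thesis .
qed

lemma ind_shd_meas: "(indicator {\<omega>. \<not> shd \<omega>} :: bool stream \<Rightarrow> ennreal) \<in> borel_measurable (coin_space r)"
  unfolding coin_space_def by measurable

lemma main_formula:
  assumes d: "0 \<le> d" "d \<le> 1" and r: "0 \<le> r" "r \<le> 1" and x: "x < 1"
    and K: "\<forall>n<K. real n * (1 - x) < x"
  shows "\<exists>R. 0 \<le> R \<and> R \<le> r ^ K \<and> R \<le> d ^ K \<and>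
           g d r x = 1 - ((\<Sum>n<K. d ^ Suc n * r ^ n * (1 - r)) + R)"
proof -
  interpret P: prob_space "coin_space r" by (rule coin_prob)
  define h where "h = (\<lambda>\<omega>. enat_pow d (walk_N x \<omega>))"
  have hm[measurable]: "h \<in> borel_measurable (coin_space r)" unfolding h_def by measurable
  have h0: "\<And>\<omega>. 0 \<le> h \<omega>" unfolding h_def using d by (simp add: h_nonneg)
  have h1: "\<And>\<omega>. h \<omega> \<le> 1" unfolding h_def using d by (simp add: h_le1)
  have hi: "integrable (coin_space r) h"
    by (rule P.integrable_const_bound[where B=1]) (auto simp: h0 h1 abs_of_nonneg)
  have g_eq: "g d r x = 1 - integral\<^sup>L (coin_space r) h"
  proof -
    have "g d r x = integral\<^sup>L (coin_space r) (\<lambda>\<omega>. 1 - h \<omega>)" by (simp add: g_def h_def)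
    then show ?thesis using hi using P.prob_space by (simp add: Bochner_Integration.integral_diff)
  qed
  define A where "A = (\<lambda>n. {\<omega>::bool stream. \<forall>k<n. \<omega> !! k})"
  define B where "B = (\<lambda>n. {\<omega>::bool stream. (\<forall>k<n. \<omega> !! k) \<and> \<not> \<omega> !! n})"
  have Am[measurable]: "A n \<in> sets (coin_space r)" for n
  proof -
    have "Measurable.pred (coin_space r) (\<lambda>\<omega>. \<forall>k<n. \<omega> !! k)" unfolding coin_space_def by measurable
    then show ?thesis unfolding A_def pred_def by simp
  qed
  have Bm[measurable]: "B n \<in> sets (coin_space r)" for n
  proof -
    have "Measurable.pred (coin_space r) (\<lambda>\<omega>. (\<forall>k<n. \<omega> !! k) \<and> \<not> \<omega> !! n)" unfolding coin_space_def by measurable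
    then show ?thesis unfolding B_def pred_def by simp
  qed
  have dec: "\<And>\<omega>. ennreal (h \<omega>) = (\<Sum>n<K. ennreal (d ^ Suc n) * indicator (B n) \<omega>) + indicator (A K) \<omega> * ennreal (h \<omega>)"
    unfolding h_def A_def B_def by (rule h_decomp[OF x K])
  have Bn: "(\<integral>\<^sup>+\<omega>. indicator (B n) \<omega> \<partial>coin_space r) = ennreal (r ^ n * (1 - r))" for n
  proof -
    have "(\<integral>\<^sup>+\<omega>. indicator (B n) \<omega> \<partial>coin_space r) = (\<integral>\<^sup>+\<omega>. indicator {\<omega>. \<forall>k<n. \<omega> !! k} \<omega> * indicator {\<omega>. \<not> shd \<omega>} (sdrop n \<omega>) \<partial>coin_space r)"
      by (rule nn_integral_cong) (auto simp: B_def indicator_def)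
    also have "\<dots> = ennreal (r ^ n) * ennreal (1 - r)"
      by (subst prefix_nn[OF r ind_shd_meas]) (auto simp: nn_not_shd[OF r])
    finally show ?thesis using r by (simp add: ennreal_mult)
  qed
  define R' where "R' = (\<integral>\<^sup>+\<omega>. indicator (A K) \<omega> * ennreal (h \<omega>) \<partial>coin_space r)"
  have R1: "R' \<le> ennreal (r ^ K)"
  proof -
    have "R' \<le> (\<integral>\<^sup>+\<omega>. indicator {\<omega>. \<forall>k<K. \<omega> !! k} \<omega> * (\<lambda>_. 1) (sdrop K \<omega>) \<partial>coin_space r)"
      unfolding R'_def A_def using h1
      by (intro nn_integral_mono) (auto simp: indicator_def)
    also have "\<dots> = ennreal (r ^ K)"
      using P.emeasure_space_1 by (subst prefix_nn[OF r]) auto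
    finally show ?thesis .
  qed
  have R2: "R' \<le> ennreal (d ^ K)"
  proof -
    have "R' \<le> (\<integral>\<^sup>+\<omega>. ennreal (d ^ K) \<partial>coin_space r)"
      unfolding R'_def A_def h_def using h_A[OF x _ d]
      by (intro nn_integral_mono) (auto simp: indicator_def intro!: ennreal_leI)
    also have "\<dots> = ennreal (d ^ K)" using P.emeasure_space_1 by simp
    finally show ?thesis .
  qed
  have nn: "(\<integral>\<^sup>+\<omega>. ennreal (h \<omega>) \<partial>coin_space r) = ennreal (\<Sum>n<K. d ^ Suc n * r ^ n * (1 - r)) + R'"
  proof -
    have "(\<integral>\<^sup>+\<omega>. ennreal (h \<omega>) \<partial>coin_space r) = (\<integral>\<^sup>+\<omega>. (\<Sum>n<K. ennreal (d ^ Suc n) * indicator (B n) \<omega>) + indicator (A K) \<omega> * ennreal (h \<omega>) \<partial>coin_space r)"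
      by (subst dec) simp
    also have "\<dots> = (\<Sum>n<K. ennreal (d ^ Suc n) * (\<integral>\<^sup>+\<omega>. indicator (B n) \<omega> \<partial>coin_space r)) + R'"
      unfolding R'_def
      apply (subst nn_integral_add, measurable)
      apply (subst nn_integral_sum, measurable)
      apply (subst nn_integral_cmult, measurable)
      done
    also have "\<dots> = (\<Sum>n<K. ennreal (d ^ Suc n * r ^ n * (1 - r))) + R'"
      using d r by (simp add: Bn ennreal_mult mult.assoc)
    also have "\<dots> = ennreal (\<Sum>n<K. d ^ Suc n * r ^ n * (1 - r)) + R'"
      using d r by (subst sum_ennreal) auto
    finally show ?thesis .
  qed
  define R where "R = enn2real R'"
  have Rfin: "R' < \<infinity>" using R1 by (simp add: le_less_trans)
  have "integral\<^sup>L (coin_space r) h = enn2real (\<integral>\<^sup>+\<omega>. ennreal (h \<omega>) \<partial>coin_space r)"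
    by (rule integral_eq_nn_integral) (auto simp: h0)
  also have "\<dots> = (\<Sum>n<K. d ^ Suc n * r ^ n * (1 - r)) + R"
  proof -
    have "0 \<le> (\<Sum>n<K. d ^ Suc n * r ^ n * (1 - r))" using d r by (auto intro!: sum_nonneg)
    then show ?thesis unfolding nn R_def using Rfin
      by (subst enn2real_plus) auto
  qed
  finally have "integral\<^sup>L (coin_space r) h = (\<Sum>n<K. d ^ Suc n * r ^ n * (1 - r)) + R" .
  moreover have "0 \<le> R" unfolding R_def by simp
  moreover have "R \<le> r ^ K" unfolding R_def using R1 r by (simp add: enn2real_leI)
  moreover have "R \<le> d ^ K" unfolding R_def using R2 d by (simp add: enn2real_leI)
  ultimately show ?thesis using g_eq by auto
qed

lemma g_bounds:
  assumes d: "0 \<le> d" "d < 1" and r: "0 \<le> r" "r \<le> 1" and x: "x < 1"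
    and K: "\<forall>n<K. real n * (1 - x) < x"
  shows "g d r x \<le> 1 - d * (1 - r) * (1 - (d * r) ^ K) / (1 - d * r)"
    and "1 - d * (1 - r) * (1 - (d * r) ^ K) / (1 - d * r) - r ^ K \<le> g d r x"
    and "1 - d * (1 - r) / (1 - d) - d ^ K \<le> g d r x"
proof -
  obtain R where R: "0 \<le> R" "R \<le> r ^ K" "R \<le> d ^ K"
    and geq: "g d r x = 1 - ((\<Sum>n<K. d ^ Suc n * r ^ n * (1 - r)) + R)"
    using main_formula[OF _ _ r x K, of d] d by auto
  have dr: "d * r < 1" using d r by (metis le_less_trans mult_left_le mult.commute)
  have "(\<Sum>n<K. d ^ Suc n * r ^ n * (1 - r)) = d * (1 - r) * (\<Sum>n<K. (d * r) ^ n)"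
    by (simp add: sum_distrib_left power_mult_distrib mult_ac)
  also have "\<dots> = d * (1 - r) * (1 - (d * r) ^ K) / (1 - d * r)"
    using dr by (simp add: sum_gp_strict)
  finally have S: "(\<Sum>n<K. d ^ Suc n * r ^ n * (1 - r)) = d * (1 - r) * (1 - (d * r) ^ K) / (1 - d * r)" .
  show "g d r x \<le> 1 - d * (1 - r) * (1 - (d * r) ^ K) / (1 - d * r)"
    using geq S R by simp
  show "1 - d * (1 - r) * (1 - (d * r) ^ K) / (1 - d * r) - r ^ K \<le> g d r x"
    using geq S R by simp
  have p0: "0 \<le> (d * r) ^ K" using d r by simp
  have "d * (1 - r) * (1 - (d * r) ^ K) / (1 - d * r) \<le> d * (1 - r) / (1 - d * r)"
    using d r p0 dr by (intro divide_right_mono) (auto simp: mult_left_le)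
  also have "\<dots> \<le> d * (1 - r) / (1 - d)"
    using d r dr by (intro divide_left_mono) (auto simp: mult_left_le mult_le_one)
  finally show "1 - d * (1 - r) / (1 - d) - d ^ K \<le> g d r x"
    using geq S R by simp
qed



lemma F_lim:
  fixes e :: real assumes e: "0 \<le> e"
  shows "((\<lambda>t. t / (1 + e + t)) \<longlongrightarrow> 1) at_top"
proof -
  have f: "filterlim (\<lambda>t::real. 1 + e + t) at_top at_top"
    by (rule filterlim_tendsto_add_at_top[OF tendsto_const filterlim_ident])
  have "((\<lambda>t. 1 - (1 + e) * inverse (1 + e + t)) \<longlongrightarrow> 1 - (1 + e) * 0) at_top"
    by (intro tendsto_intros tendsto_inverse_0_at_top f)
  moreover have "eventually (\<lambda>t. 1 - (1 + e) * inverse (1 + e + t) = t / (1 + e + t)) at_top"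
    using eventually_ge_at_top[of 0] by eventually_elim (use e in \<open>auto simp: field_simps\<close>)
  ultimately show ?thesis by (simp add: tendsto_cong)
qed

lemma a_lim:
  fixes e r2 :: real assumes e: "0 \<le> e" and r2: "r2 < 1"
  shows "filterlim (\<lambda>t. ln ((1 - r2) / (1 - t / (1 + e + t)))) at_top at_top"
proof -
  have f: "filterlim (\<lambda>t::real. (1 - r2) / (1 + e) * (1 + e + t)) at_top at_top"
    using r2 e
    by (intro filterlim_tendsto_pos_mult_at_top[OF tendsto_const] filterlim_tendsto_add_at_top[OF tendsto_const filterlim_ident]) auto
  have L: "filterlim (\<lambda>t. ln ((1 - r2) / (1 + e) * (1 + e + t))) at_top at_top"
    by (rule filterlim_compose[OF ln_at_top f])
  have Ev: "eventually (\<lambda>t. ln ((1 - r2) / (1 + e) * (1 + e + t)) = ln ((1 - r2) / (1 - t / (1 + e + t)))) at_top"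
    using eventually_ge_at_top[of 0] by eventually_elim (use e in \<open>auto simp: field_simps\<close>)
  show ?thesis using filterlim_cong[OF refl refl Ev] L by simp
qed

lemma b_lim:
  fixes e r2 :: real assumes e: "0 \<le> e" and r2: "0 < r2"
  shows "((\<lambda>t. ln (t / (1 + e + t) / r2)) \<longlongrightarrow> ln (1 / r2)) at_top"
  using r2 by (intro tendsto_intros F_lim e) auto



lemma E_lim: "filterlim (\<lambda>p::real. exp ((1 - p) / p)) at_top (at_right 0)"
proof -
  have L: "filterlim (\<lambda>p::real. -1 + inverse p) at_top (at_right 0)"
    by (rule filterlim_tendsto_add_at_top[OF tendsto_const filterlim_inverse_at_top_right])
  have Ev: "eventually (\<lambda>p::real. -1 + inverse p = (1 - p) / p) (at_right 0)"
    using eventually_at_right_less[of 0] unfolding eventually_at_right_field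
    by (auto intro!: exI[of _ 1] simp: field_simps)
  have "filterlim (\<lambda>p::real. (1 - p) / p) at_top (at_right 0)"
    using filterlim_cong[OF refl refl Ev] L by simp
  then show ?thesis by (rule filterlim_compose[OF exp_at_top])
qed

theorem lemma2:
  fixes \<delta> VP :: real
  assumes "0 \<le> \<delta>" "\<delta> < 1" "0 \<le> VP"
  shows "((\<lambda>p. g \<delta> (rho1 VP p) (cc VP p)) \<longlongrightarrow> 1) (at_right 0) \<and>
         ((\<lambda>p. g \<delta> (rho2 VP) (cc VP p)) \<longlongrightarrow> (1 - \<delta>) / (1 - \<delta> * rho2 VP)) (at_right 0)"
proof -
  note d = assms(1,2)
  define r2 where "r2 = rho2 VP"
  have e0: "0 \<le> exp VP" by simp
  have r2p: "0 < r2" unfolding r2_def rho2_def by (simp add: add_pos_pos)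
  have r21: "r2 < 1" unfolding r2_def rho2_def by (simp add: add_pos_pos)
  define F where "F = (\<lambda>t::real. t / (1 + exp VP + t))"
  define a where "a = (\<lambda>t. ln ((1 - r2) / (1 - F t)))"
  define b where "b = (\<lambda>t. ln (F t / r2))"
  define C where "C = (\<lambda>t. a t / (b t + a t))"
  define K where "K = (\<lambda>t. nat \<lceil>a t / b t\<rceil>)"
  have rho1_eq: "rho1 VP p = F (exp ((1 - p) / p))" for p
    unfolding rho1_def F_def by simp
  have cc_eq: "cc VP p = C (exp ((1 - p) / p))" for p
    unfolding cc_def C_def a_def b_def rho1_eq r2_def by simp
  have Flim: "(F \<longlongrightarrow> 1) at_top" unfolding F_def by (rule F_lim[OF e0])
  have alim: "filterlim a at_top at_top" unfolding a_def F_def by (rule a_lim[OF e0 r21])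
  have blim: "(b \<longlongrightarrow> ln (1 / r2)) at_top" unfolding b_def F_def by (rule b_lim[OF e0 r2p])
  have lnpos: "0 < ln (1 / r2)" using r2p r21 by simp
  have ev: "eventually (\<lambda>t. 0 < t \<and> r2 < F t \<and> F t < 1 \<and> 0 < a t \<and> 0 < b t) at_top"
  proof -
    have "eventually (\<lambda>t. r2 < F t) at_top" using Flim r21 by (rule order_tendstoD)
    then show ?thesis using eventually_gt_at_top[of 0]
    proof eventually_elim
      case (elim t)
      have F1: "F t < 1" unfolding F_def using elim e0 by (simp add: add_pos_nonneg)
      have "0 < b t" unfolding b_def using elim r2p by simp
      moreover have "0 < a t" unfolding a_def using elim F1 r21 by simp
      ultimately show ?case using elim F1 by simp
    qed
  qed
  have evK: "eventually (\<lambda>t. 0 \<le> F t \<and> F t \<le> 1 \<and> C t < 1 \<and> (\<forall>n<K t. real n * (1 - C t) < C t)) at_top"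
    using ev
  proof eventually_elim
    case (elim t)
    have C1: "1 - C t = b t / (b t + a t)" unfolding C_def using elim by (simp add: field_simps)
    have "real n * (1 - C t) < C t" if "n < K t" for n
    proof -
      have "int n < \<lceil>a t / b t\<rceil>" using that unfolding K_def by linarith
      then have "real n < a t / b t" by (simp add: less_ceiling_iff)
      then have "real n * b t < a t" using elim by (simp add: field_simps)
      then have "real n * b t / (b t + a t) < a t / (b t + a t)"
        using elim by (intro divide_strict_right_mono) auto
      then show ?thesis unfolding C1 by (simp add: C_def)
    qed
    moreover have "C t < 1"
    proof -
      have "0 < b t / (b t + a t)" using elim by simp
      then show ?thesis using C1 by linarith
    qed
    moreover have "0 \<le> F t" unfolding F_def using elim e0 by simp
    ultimately show ?case using elim by simp
  qed
  have Klim: "filterlim K at_top at_top"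
  proof -
    have "((\<lambda>t. inverse (b t)) \<longlongrightarrow> inverse (ln (1 / r2))) at_top"
      using blim lnpos by (intro tendsto_intros) auto
    then have ab: "filterlim (\<lambda>t. inverse (b t) * a t) at_top at_top"
      using lnpos alim by (intro filterlim_tendsto_pos_mult_at_top[of _ "inverse (ln (1 / r2))"]) auto
    show ?thesis unfolding filterlim_at_top
    proof
      fix Z :: nat
      show "eventually (\<lambda>t. Z \<le> K t) at_top"
        using ab[unfolded filterlim_at_top, rule_format, of "real Z"]
      proof eventually_elim
        case (elim t)
        then have "real Z \<le> a t / b t" by (simp add: field_simps)
        then show ?case unfolding K_def by linarith
      qed
    qed
  qed
  have powlim: "((\<lambda>t. q ^ K t) \<longlongrightarrow> 0) at_top" if "0 \<le> q" "q < 1" for q :: real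
    using filterlim_compose[OF LIMSEQ_power_zero[of q] Klim] that by simp
  have dr2: "\<delta> * r2 < 1" using d r2p r21
    by (metis le_less_trans less_eq_real_def mult_left_le mult.commute)
  have G1: "((\<lambda>t. g \<delta> (F t) (C t)) \<longlongrightarrow> 1) at_top"
  proof (rule tendsto_sandwich)
    show "eventually (\<lambda>t. 1 - \<delta> * (1 - F t) / (1 - \<delta>) - \<delta> ^ K t \<le> g \<delta> (F t) (C t)) at_top"
      using evK by eventually_elim (use d in \<open>auto intro: g_bounds(3)\<close>)
    show "eventually (\<lambda>t. g \<delta> (F t) (C t) \<le> 1) at_top"
      using evK
    proof eventually_elim
      case (elim t)
      have "0 \<le> \<delta> * (1 - F t) * (1 - (\<delta> * F t) ^ K t) / (1 - \<delta> * F t)"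
        using elim d by (intro divide_nonneg_nonneg mult_nonneg_nonneg)
          (auto simp: power_le_one mult_le_one)
      moreover have "g \<delta> (F t) (C t) \<le> 1 - \<delta> * (1 - F t) * (1 - (\<delta> * F t) ^ K t) / (1 - \<delta> * F t)"
        using g_bounds(1)[OF d, of "F t" "C t" "K t"] elim by blast
      ultimately show ?case by linarith
    qed
    have "((\<lambda>t. 1 - \<delta> * (1 - F t) / (1 - \<delta>) - \<delta> ^ K t) \<longlongrightarrow> 1 - \<delta> * (1 - 1) / (1 - \<delta>) - 0) at_top"
      using d by (intro tendsto_intros Flim powlim) auto
    then show "((\<lambda>t. 1 - \<delta> * (1 - F t) / (1 - \<delta>) - \<delta> ^ K t) \<longlongrightarrow> 1) at_top" by simp
  qed simp
  have G2: "((\<lambda>t. g \<delta> r2 (C t)) \<longlongrightarrow> (1 - \<delta>) / (1 - \<delta> * r2)) at_top"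
  proof (rule tendsto_sandwich)
    show "eventually (\<lambda>t. 1 - \<delta> * (1 - r2) * (1 - (\<delta> * r2) ^ K t) / (1 - \<delta> * r2) - r2 ^ K t \<le> g \<delta> r2 (C t)) at_top"
      using evK by eventually_elim (use d r2p r21 in \<open>auto intro: g_bounds(2)\<close>)
    show "eventually (\<lambda>t. g \<delta> r2 (C t) \<le> 1 - \<delta> * (1 - r2) * (1 - (\<delta> * r2) ^ K t) / (1 - \<delta> * r2)) at_top"
      using evK by eventually_elim (use d r2p r21 in \<open>auto intro: g_bounds(1)\<close>)
    have eq: "(1 - \<delta>) / (1 - \<delta> * r2) = 1 - \<delta> * (1 - r2) * (1 - 0) / (1 - \<delta> * r2)"
      using dr2 by (simp add: field_simps)
    have "((\<lambda>t. 1 - \<delta> * (1 - r2) * (1 - (\<delta> * r2) ^ K t) / (1 - \<delta> * r2) - r2 ^ K t) \<longlongrightarrow> 1 - \<delta> * (1 - r2) * (1 - 0) / (1 - \<delta> * r2) - 0) at_top"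
      using d r2p r21 dr2 by (intro tendsto_intros powlim) auto
    then show "((\<lambda>t. 1 - \<delta> * (1 - r2) * (1 - (\<delta> * r2) ^ K t) / (1 - \<delta> * r2) - r2 ^ K t) \<longlongrightarrow> (1 - \<delta>) / (1 - \<delta> * r2)) at_top"
      using eq by simp
    have "((\<lambda>t. 1 - \<delta> * (1 - r2) * (1 - (\<delta> * r2) ^ K t) / (1 - \<delta> * r2)) \<longlongrightarrow> 1 - \<delta> * (1 - r2) * (1 - 0) / (1 - \<delta> * r2)) at_top"
      using d r2p r21 dr2 by (intro tendsto_intros powlim) auto
    then show "((\<lambda>t. 1 - \<delta> * (1 - r2) * (1 - (\<delta> * r2) ^ K t) / (1 - \<delta> * r2)) \<longlongrightarrow> (1 - \<delta>) / (1 - \<delta> * r2)) at_top"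
      using eq by simp
  qed
  have "((\<lambda>p. g \<delta> (F (exp ((1 - p) / p))) (C (exp ((1 - p) / p)))) \<longlongrightarrow> 1) (at_right 0)"
    by (rule filterlim_compose[OF G1 E_lim])
  moreover have "((\<lambda>p. g \<delta> r2 (C (exp ((1 - p) / p)))) \<longlongrightarrow> (1 - \<delta>) / (1 - \<delta> * r2)) (at_right 0)"
    by (rule filterlim_compose[OF G2 E_lim])
  ultimately show ?thesis unfolding rho1_eq cc_eq r2_def by simp
qed

end
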